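(* Let $\Omega\subseteq\mathbb{R}^n$ be open and $u:\Omega\to\mathbb{R}^N$ continuous. (1) Let $F:\Omega\times\mathbb{R}^N\times\mathbb{R}^{N\times n}\times(\mathbb{R}^N\otimes\mathbb{R}^{n\times n}_s)\to\mathbb{R}^N$ be locally bounded. Then $u$ is a contact solution of $F(\cdot,u,Du,D^2u)=0$ on $\Omega$ if and only if for every $x\in\Omega$, $\xi\in\mathbb{S}^{N-1}$ and $(P,\mathbf{X})\in J^{2,\xi}u(x)$ one has $\xi^*F(x,u(x),P,\mathbf{X})\ge0$. (2) Let $F:\Omega\times\mathbb{R}^N\times\mathbb{R}^{N\times n}\to\mathbb{R}^N$ be locally bounded. Then $u$ is a contact solution of $F(\cdot,u,Du)=0$ on $\Omega$ if and only if for every $x\in\Omega$, $\xi\in\mathbb{S}^{N-1}$ and $P\in J^{1,\xi}u(x)$ one has $\xi^*F(x,u(x),P)\ge0$. If moreover $F$ is continuous, then in both characterisations $\xi^*F$ may be replaced by $\xi^\top F$.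
   Context: $\mathbb{R}^N\otimes\mathbb{R}^{n\times n}_s$: arrays $\mathbf{X}=(\mathbf{X}_{\alpha ij})$ symmetric in $i,j$; $\mathbf{X}:z\otimes z$ has components $\sum_{ij}\mathbf{X}_{\alpha ij}z_iz_j$. For $a,b\in\mathbb{R}^N$, $a\vee b:=\frac12(a\otimes b+b\otimes a)$; matrix inequalities in the sense of quadratic forms. Contact jets: $J^{1,\xi}u(x)$ is the set of $P\in\mathbb{R}^{N\times n}$ for which there is a continuous $T:\mathbb{R}^n\setminus\{0\}\to\mathbb{R}^{N\times N}_s$ with $|T(y)|\to0$ as $y\to0$ and $\xi\vee[u(z)-u(x)-P(z-x)]\le|z-x|T(z-x)$ for $z\ne x$ near $x$; $J^{2,\xi}u(x)$ is the set of $(P,\mathbf{X})$ with such a $T$ and $\xi\vee[u(z)-u(x)-P(z-x)-\frac12\mathbf{X}:(z-x)\otimes(z-x)]\le|z-x|^2T(z-x)$ for $z\ne x$ near $x$. Closures: $\bar J^{1,\xi}u(x)$ is the set of $P$ for which there are $\xi_m\in\mathbb{S}^{N-1}$, $x_m\in\Omega$, $P_m\in J^{1,\xi_m}u(x_m)$ with $(\xi_m,x_m,P_m)\to(\xi,x,P)$; $\bar J^{2,\xi}u(x)$ is defined analogously with $(P_m,\mathbf{X}_m)\in J^{2,\xi_m}u(x_m)$ converging to $(P,\mathbf{X})$. $\xi$-envelope: $\xi^*F$ is the upper semicontinuous envelope of $\xi^\top F$, i.e. $\xi^*F(p):=\limsup_{\varepsilon\to0}\sup\{\xi^\top F(q):|p-q|\le\varepsilon\}$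 where $p,q$ denote the full argument tuples. Contact solutions: $u$ is a contact solution of $F(\cdot,u,Du,D^2u)=0$ if for all $x\in\Omega$, $\xi\in\mathbb{S}^{N-1}$, $(P,\mathbf{X})\in\bar J^{2,\xi}u(x)$ we have $\xi^*F(x,u(x),P,\mathbf{X})\ge0$; $u$ is a contact solution of $F(\cdot,u,Du)=0$ if for all $x,\xi$ and $P\in\bar J^{1,\xi}u(x)$ we have $\xi^*F(x,u(x),P)\ge0$. *)

theory Defs
  imports "HOL-Analysis.Analysis"
begin

text \<open>Dimensions n and N are finite index types 'n, 'N.
  Vectors in R^n: real^'n; u : Omega -> R^N is a total function real^'n => real^'N
  used only on Omega.  P in R^(N x n): real^'n^'N (row alpha is P$alpha), so P(z-x) = P *v (z-x).
  X in R^N (x) R^(n x n)_s: real^'n^'n^'N with X$alpha$i$j, symmetric in i,j.\<close>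

definition symX :: "real^'n^'n^'N \<Rightarrow> bool" where
  "symX X \<longleftrightarrow> (\<forall>\<alpha>. transpose (X $ \<alpha>) = X $ \<alpha>)"

definition quadX :: "real^'n^'n^'N \<Rightarrow> real^'n \<Rightarrow> real^'N" where
  "quadX X z = (\<chi> \<alpha>. \<Sum>i\<in>UNIV. \<Sum>j\<in>UNIV. X $ \<alpha> $ i $ j * z $ i * z $ j)"

definition vee :: "real^'N \<Rightarrow> real^'N \<Rightarrow> real^'N^'N" where
  "vee a b = (\<chi> i j. (a $ i * b $ j + b $ i * a $ j) / 2)"

definition mat_le :: "real^'N^'N \<Rightarrow> real^'N^'N \<Rightarrow> bool" where
  "mat_le A B \<longleftrightarrow> (\<forall>v. v \<bullet> (A *v v) \<le> v \<bullet> (B *v v))"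

definition admT :: "(real^'n \<Rightarrow> real^'N^'N) \<Rightarrow> bool" where
  "admT T \<longleftrightarrow> continuous_on (- {0}) T \<and> (\<forall>y. y \<noteq> 0 \<longrightarrow> transpose (T y) = T y)
      \<and> (T \<longlongrightarrow> 0) (at 0)"

definition J1 :: "(real^'n) set \<Rightarrow> (real^'n \<Rightarrow> real^'N) \<Rightarrow> real^'N \<Rightarrow> real^'n \<Rightarrow> (real^'n^'N) set" where
  "J1 \<Omega> u \<xi> x = {P. \<exists>T. admT T \<and> (\<exists>r>0. \<forall>z\<in>\<Omega>. 0 < dist z x \<and> dist z x < r \<longrightarrow>
      mat_le (vee \<xi> (u z - u x - P *v (z - x))) (norm (z - x) *\<^sub>R T (z - x)))}"

definition J2 :: "(real^'n) set \<Rightarrow> (real^'n \<Rightarrow> real^'N) \<Rightarrow> real^'N \<Rightarrow> real^'n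
    \<Rightarrow> ((real^'n^'N) \<times> (real^'n^'n^'N)) set" where
  "J2 \<Omega> u \<xi> x = {(P, X). symX X \<and> (\<exists>T. admT T \<and> (\<exists>r>0. \<forall>z\<in>\<Omega>. 0 < dist z x \<and> dist z x < r \<longrightarrow>
      mat_le (vee \<xi> (u z - u x - P *v (z - x) - (1/2) *\<^sub>R quadX X (z - x)))
             ((norm (z - x))\<^sup>2 *\<^sub>R T (z - x))))}"

definition J1bar :: "(real^'n) set \<Rightarrow> (real^'n \<Rightarrow> real^'N) \<Rightarrow> real^'N \<Rightarrow> real^'n \<Rightarrow> (real^'n^'N) set" where
  "J1bar \<Omega> u \<xi> x = {P. \<exists>\<xi>s xs Ps. (\<forall>m. \<xi>s m \<in> sphere 0 1 \<and> xs m \<in> \<Omega> \<and> Ps m \<in> J1 \<Omega> u (\<xi>s m) (xs m))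
      \<and> \<xi>s \<longlonglongrightarrow> \<xi> \<and> xs \<longlonglongrightarrow> x \<and> Ps \<longlonglongrightarrow> P}"

definition J2bar :: "(real^'n) set \<Rightarrow> (real^'n \<Rightarrow> real^'N) \<Rightarrow> real^'N \<Rightarrow> real^'n
    \<Rightarrow> ((real^'n^'N) \<times> (real^'n^'n^'N)) set" where
  "J2bar \<Omega> u \<xi> x = {(P, X). \<exists>\<xi>s xs Ps Xs. (\<forall>m. \<xi>s m \<in> sphere 0 1 \<and> xs m \<in> \<Omega> \<and> (Ps m, Xs m) \<in> J2 \<Omega> u (\<xi>s m) (xs m))
      \<and> \<xi>s \<longlonglongrightarrow> \<xi> \<and> xs \<longlonglongrightarrow> x \<and> Ps \<longlonglongrightarrow> P \<and> Xs \<longlonglongrightarrow> X}"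

text \<open>Upper semicontinuous envelope of xi^T G on the domain D (the limsup as eps -> 0 of the
  sup over the closed eps-ball, a decreasing function of eps, hence an infimum), in ereal.\<close>
definition usc_env :: "'a::metric_space set \<Rightarrow> ('a \<Rightarrow> real^'N) \<Rightarrow> real^'N \<Rightarrow> 'a \<Rightarrow> ereal" where
  "usc_env D G \<xi> p = (INF \<epsilon>\<in>{0<..}. SUP q\<in>D \<inter> cball p \<epsilon>. ereal (\<xi> \<bullet> G q))"

definition locally_bounded :: "'a::metric_space set \<Rightarrow> ('a \<Rightarrow> 'b::real_normed_vector) \<Rightarrow> bool" where
  "locally_bounded D G \<longleftrightarrow> (\<forall>p\<in>D. \<exists>e>0. bounded (G ` (D \<inter> ball p e)))"

definition D2 :: "(real^'n) set \<Rightarrow> ((real^'n) \<times> (real^'N) \<times> (real^'n^'N) \<times> (real^'n^'n^'N)) set" where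
  "D2 \<Omega> = {(x, r, P, X). x \<in> \<Omega> \<and> symX X}"

definition G2 :: "(real^'n \<Rightarrow> real^'N \<Rightarrow> real^'n^'N \<Rightarrow> real^'n^'n^'N \<Rightarrow> real^'N)
    \<Rightarrow> ((real^'n) \<times> (real^'N) \<times> (real^'n^'N) \<times> (real^'n^'n^'N)) \<Rightarrow> real^'N" where
  "G2 F = (\<lambda>(x, r, P, X). F x r P X)"

definition D1 :: "(real^'n) set \<Rightarrow> ((real^'n) \<times> (real^'N) \<times> (real^'n^'N)) set" where
  "D1 \<Omega> = {(x, r, P). x \<in> \<Omega>}"

definition G1 :: "(real^'n \<Rightarrow> real^'N \<Rightarrow> real^'n^'N \<Rightarrow> real^'N)
    \<Rightarrow> ((real^'n) \<times> (real^'N) \<times> (real^'n^'N)) \<Rightarrow> real^'N" where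
  "G1 F = (\<lambda>(x, r, P). F x r P)"

definition contact_sol2 :: "(real^'n) set \<Rightarrow> (real^'n \<Rightarrow> real^'N)
    \<Rightarrow> (real^'n \<Rightarrow> real^'N \<Rightarrow> real^'n^'N \<Rightarrow> real^'n^'n^'N \<Rightarrow> real^'N) \<Rightarrow> bool" where
  "contact_sol2 \<Omega> u F \<longleftrightarrow> (\<forall>x\<in>\<Omega>. \<forall>\<xi>\<in>sphere 0 1. \<forall>(P, X)\<in>J2bar \<Omega> u \<xi> x.
      usc_env (D2 \<Omega>) (G2 F) \<xi> (x, u x, P, X) \<ge> 0)"

definition contact_sol1 :: "(real^'n) set \<Rightarrow> (real^'n \<Rightarrow> real^'N)
    \<Rightarrow> (real^'n \<Rightarrow> real^'N \<Rightarrow> real^'n^'N \<Rightarrow> real^'N) \<Rightarrow> bool" where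
  "contact_sol1 \<Omega> u F \<longleftrightarrow> (\<forall>x\<in>\<Omega>. \<forall>\<xi>\<in>sphere 0 1. \<forall>P\<in>J1bar \<Omega> u \<xi> x.
      usc_env (D1 \<Omega>) (G1 F) \<xi> (x, u x, P) \<ge> 0)"

end

theory Submission
  imports Defs
begin

lemma ereal_nonneg_eps:
  fixes y :: ereal
  assumes "\<And>d. d > 0 \<Longrightarrow> ereal (-d) \<le> y"
  shows "0 \<le> y"
proof (cases y)
  case (real r)
  have h: "-d \<le> r" if "d > 0" for d using assms[OF that] real by simp
  have "0 \<le> r"
  proof (rule ccontr)
    assume "\<not> 0 \<le> r"
    then have "-r/2 > 0" by simp
    from h[OF this] have "r/2 \<le> r" by simp
    with \<open>\<not> 0 \<le> r\<close> show False by simp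
  qed
  then show ?thesis using real by simp
next
  case PInf then show ?thesis by simp
next
  case MInf then show ?thesis using assms[of 1] by simp
qed
lemma symX_limit:
  assumes "\<forall>m. symX (Xs m)" "Xs \<longlonglongrightarrow> X"
  shows "symX X"
proof -
  have "X $ a $ j $ i = X $ a $ i $ j" for a i j
  proof -
    have l1: "(\<lambda>m. Xs m $ a $ i $ j) \<longlonglongrightarrow> X $ a $ i $ j"
      using assms(2) by (intro tendsto_vec_nth)
    have l2: "(\<lambda>m. Xs m $ a $ j $ i) \<longlonglongrightarrow> X $ a $ j $ i"
      using assms(2) by (intro tendsto_vec_nth)
    have "Xs m $ a $ j $ i = Xs m $ a $ i $ j" for m
    proof -
      have "transpose (Xs m $ a) = Xs m $ a" using assms(1) unfolding symX_def by blast
      then have "transpose (Xs m $ a) $ i $ j = Xs m $ a $ i $ j" by simp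
      then show ?thesis by (simp add: transpose_def)
    qed
    then have "(\<lambda>m. Xs m $ a $ j $ i) = (\<lambda>m. Xs m $ a $ i $ j)" by auto
    with l1 l2 show ?thesis using LIMSEQ_unique by metis
  qed
  then show ?thesis unfolding symX_def by (simp add: transpose_def vec_eq_iff)
qed

lemma usc_env_cont:
  fixes G :: "'a::metric_space \<Rightarrow> real^'N"
  assumes cont: "continuous_on D G" and pD: "p \<in> D"
  shows "usc_env D G \<xi> p = ereal (\<xi> \<bullet> G p)"
proof (rule antisym)
  show "ereal (\<xi> \<bullet> G p) \<le> usc_env D G \<xi> p"
    unfolding usc_env_def
  proof (rule INF_greatest)
    fix e :: real assume "e \<in> {0<..}"
    then have "p \<in> D \<inter> cball p e" using pD by auto
    then show "ereal (\<xi> \<bullet> G p) \<le> (SUP q\<in>D \<inter> cball p e. ereal (\<xi> \<bullet> G q))"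
      by (rule SUP_upper2) simp
  qed
next
  show "usc_env D G \<xi> p \<le> ereal (\<xi> \<bullet> G p)"
  proof (rule ereal_le_epsilon2)
    fix d :: real assume d: "0 < d"
    define k where "k = d / (norm \<xi> + 1)"
    have k: "k > 0" proof - have "norm \<xi> + 1 > 0" by (simp add: add_nonneg_pos) then show ?thesis using d by (simp add: k_def) qed
    have nk: "norm \<xi> * k < d"
    proof -
      have "norm \<xi> * k = d * (norm \<xi> / (norm \<xi> + 1))" by (simp add: k_def)
      also have "\<dots> < d * 1" using d by (intro mult_strict_left_mono) (auto simp: add_nonneg_pos)
      finally show ?thesis by simp
    qed
    obtain r where r: "r > 0" "\<forall>q\<in>D. dist q p < r \<longrightarrow> dist (G q) (G p) < k"
      using cont pD k unfolding continuous_on_iff by metis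
    have "usc_env D G \<xi> p \<le> (SUP q\<in>D \<inter> cball p (r/2). ereal (\<xi> \<bullet> G q))"
      unfolding usc_env_def by (rule INF_lower) (use r in simp)
    also have "\<dots> \<le> ereal (\<xi> \<bullet> G p + d)"
    proof (rule SUP_least)
      fix q assume q: "q \<in> D \<inter> cball p (r/2)"
      then have "dist q p < r" using r by (auto simp: dist_commute)
      then have dq: "norm (G q - G p) < k" using r q by (auto simp: dist_norm)
      have "\<xi> \<bullet> G q - \<xi> \<bullet> G p = \<xi> \<bullet> (G q - G p)" by (simp add: inner_diff_right)
      also have "\<dots> \<le> norm \<xi> * norm (G q - G p)" by (rule norm_cauchy_schwarz)
      also have "\<dots> \<le> norm \<xi> * k" using dq by (intro mult_left_mono) auto
      finally show "ereal (\<xi> \<bullet> G q) \<le> ereal (\<xi> \<bullet> G p + d)" using nk by simp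
    qed
    finally show "usc_env D G \<xi> p \<le> ereal (\<xi> \<bullet> G p) + ereal d" by simp
  qed
qed

lemma usc_env_limit:
  fixes G :: "'a::metric_space \<Rightarrow> real^'N"
  assumes lb: "locally_bounded D G" and pD: "p \<in> D"
    and xi: "\<xi>s \<longlonglongrightarrow> \<xi>" and ps: "ps \<longlonglongrightarrow> p"
    and ge: "\<forall>m. usc_env D G (\<xi>s m) (ps m) \<ge> 0"
  shows "usc_env D G \<xi> p \<ge> 0"
proof -
  obtain e where e: "e > 0" "bounded (G ` (D \<inter> ball p e))"
    using lb pD unfolding locally_bounded_def by blast
  then obtain B where B: "B > 0" "\<forall>q\<in>D \<inter> ball p e. norm (G q) \<le> B"
    unfolding bounded_pos by auto
  show ?thesis unfolding usc_env_def
  proof (rule INF_greatest)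
    fix \<epsilon> :: real assume "\<epsilon> \<in> {0<..}"
    then have \<epsilon>: "\<epsilon> > 0" by simp
    define \<epsilon>' where "\<epsilon>' = min \<epsilon> (e/2)"
    have \<epsilon>': "\<epsilon>' > 0" "\<epsilon>' \<le> \<epsilon>" "\<epsilon>' < e" using \<epsilon> e by (auto simp: \<epsilon>'_def)
    have "0 \<le> (SUP q\<in>D \<inter> cball p \<epsilon>'. ereal (\<xi> \<bullet> G q))"
    proof (rule ereal_nonneg_eps)
      fix d :: real assume d: "d > 0"
      obtain N1 where N1: "\<forall>m\<ge>N1. dist (ps m) p < \<epsilon>'/2"
        using ps \<epsilon>' unfolding LIMSEQ_def by (metis half_gt_zero)
      have "d / (2*B) > 0" using d B by simp
      then obtain N2 where N2: "\<forall>m\<ge>N2. dist (\<xi>s m) \<xi> < d / (2*B)"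
        using xi unfolding LIMSEQ_def by blast
      define m where "m = max N1 N2"
      have m1: "dist (ps m) p < \<epsilon>'/2" using N1 by (simp add: m_def)
      have m2: "norm (\<xi>s m - \<xi>) < d / (2*B)" using N2 by (simp add: m_def dist_norm)
      have "0 \<le> (SUP q\<in>D \<inter> cball (ps m) (\<epsilon>'/2). ereal (\<xi>s m \<bullet> G q))"
        using ge[rule_format, of m] \<epsilon>' unfolding usc_env_def le_INF_iff by auto
      then have "ereal (-d/2) < (SUP q\<in>D \<inter> cball (ps m) (\<epsilon>'/2). ereal (\<xi>s m \<bullet> G q))"
      proof -
        have "ereal (-d/2) < 0" using d by simp
        then show ?thesis using \<open>0 \<le> _\<close> by (rule less_le_trans)
      qed
      then obtain q where q: "q \<in> D \<inter> cball (ps m) (\<epsilon>'/2)" "-d/2 < \<xi>s m \<bullet> G q"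
        unfolding less_SUP_iff by auto
      have dqp: "dist q p < \<epsilon>'"
        using q(1) m1 dist_triangle[of q p "ps m"] by (auto simp: dist_commute)
      then have qb: "q \<in> D \<inter> ball p e" using q(1) \<epsilon>' by (auto simp: dist_commute)
      have nG: "norm (G q) \<le> B" using B qb by blast
      have "\<xi>s m \<bullet> G q - \<xi> \<bullet> G q = (\<xi>s m - \<xi>) \<bullet> G q" by (simp add: inner_diff_left)
      also have "\<dots> \<le> norm (\<xi>s m - \<xi>) * norm (G q)" by (rule norm_cauchy_schwarz)
      also have "\<dots> \<le> (d / (2*B)) * B" using m2 nG B d by (intro mult_mono) auto
      also have "\<dots> = d/2" using B by simp
      finally have "-d \<le> \<xi> \<bullet> G q" using q(2) by simp
      moreover have "q \<in> D \<inter> cball p \<epsilon>'" using qb dqp by (auto simp: dist_commute)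
      ultimately show "ereal (-d) \<le> (SUP q\<in>D \<inter> cball p \<epsilon>'. ereal (\<xi> \<bullet> G q))"
        by (intro SUP_upper2[of q]) auto
    qed
    also have "\<dots> \<le> (SUP q\<in>D \<inter> cball p \<epsilon>. ereal (\<xi> \<bullet> G q))"
      using \<epsilon>' by (intro SUP_subset_mono) auto
    finally show "0 \<le> (SUP q\<in>D \<inter> cball p \<epsilon>. ereal (\<xi> \<bullet> G q))" .
  qed
qed


lemma J2_sub_J2bar:
  assumes "x \<in> \<Omega>" "\<xi> \<in> sphere 0 1" "(P, X) \<in> J2 \<Omega> u \<xi> x"
  shows "(P, X) \<in> J2bar \<Omega> u \<xi> x"
  unfolding J2bar_def
  using assms by (auto intro!: exI[of _ "\<lambda>_. \<xi>"] exI[of _ "\<lambda>_. x"] exI[of _ "\<lambda>_. P"] exI[of _ "\<lambda>_. X"])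

lemma J1_sub_J1bar:
  assumes "x \<in> \<Omega>" "\<xi> \<in> sphere 0 1" "P \<in> J1 \<Omega> u \<xi> x"
  shows "P \<in> J1bar \<Omega> u \<xi> x"
  unfolding J1bar_def
  using assms by (auto intro!: exI[of _ "\<lambda>_. \<xi>"] exI[of _ "\<lambda>_. x"] exI[of _ "\<lambda>_. P"])

lemma part2:
  fixes \<Omega> :: "(real^'n) set" and u :: "real^'n \<Rightarrow> real^'N"
    and F2 :: "real^'n \<Rightarrow> real^'N \<Rightarrow> real^'n^'N \<Rightarrow> real^'n^'n^'N \<Rightarrow> real^'N"
  assumes "open \<Omega>" and "continuous_on \<Omega> u" and lb: "locally_bounded (D2 \<Omega>) (G2 F2)"
  shows "contact_sol2 \<Omega> u F2 \<longleftrightarrow> (\<forall>x\<in>\<Omega>. \<forall>\<xi>\<in>sphere 0 1. \<forall>(P, X)\<in>J2 \<Omega> u \<xi> x.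
          usc_env (D2 \<Omega>) (G2 F2) \<xi> (x, u x, P, X) \<ge> 0)"
proof
  assume "contact_sol2 \<Omega> u F2"
  then show "\<forall>x\<in>\<Omega>. \<forall>\<xi>\<in>sphere 0 1. \<forall>(P, X)\<in>J2 \<Omega> u \<xi> x.
          usc_env (D2 \<Omega>) (G2 F2) \<xi> (x, u x, P, X) \<ge> 0"
    unfolding contact_sol2_def using J2_sub_J2bar by fast
next
  assume H: "\<forall>x\<in>\<Omega>. \<forall>\<xi>\<in>sphere 0 1. \<forall>(P, X)\<in>J2 \<Omega> u \<xi> x.
          usc_env (D2 \<Omega>) (G2 F2) \<xi> (x, u x, P, X) \<ge> 0"
  show "contact_sol2 \<Omega> u F2"
    unfolding contact_sol2_def
  proof (intro ballI, clarify)
    fix x \<xi> P X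
    assume x: "x \<in> \<Omega>" and xi: "\<xi> \<in> sphere (0::real^'N) 1" and PX: "(P, X) \<in> J2bar \<Omega> u \<xi> x"
    from PX obtain \<xi>s xs Ps Xs where
      S: "\<forall>m. \<xi>s m \<in> sphere 0 1 \<and> xs m \<in> \<Omega> \<and> (Ps m, Xs m) \<in> J2 \<Omega> u (\<xi>s m) (xs m)"
      and L: "\<xi>s \<longlonglongrightarrow> \<xi>" "xs \<longlonglongrightarrow> x" "Ps \<longlonglongrightarrow> P" "Xs \<longlonglongrightarrow> X"
      unfolding J2bar_def by blast
    have "symX (Xs m)" for m using S unfolding J2_def by blast
    then have sX: "symX X" using symX_limit L(4) by blast
    have "isCont u x" using assms(1,2) x continuous_on_eq_continuous_at by blast
    then have Lu: "(\<lambda>m. u (xs m)) \<longlonglongrightarrow> u x" using L(2) isCont_tendsto_compose by blast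
    have Lp: "(\<lambda>m. (xs m, u (xs m), Ps m, Xs m)) \<longlonglongrightarrow> (x, u x, P, X)"
      using L Lu by (intro tendsto_Pair) auto
    have pD: "(x, u x, P, X) \<in> D2 \<Omega>" using x sX by (simp add: D2_def)
    have ge: "\<forall>m. usc_env (D2 \<Omega>) (G2 F2) (\<xi>s m) (xs m, u (xs m), Ps m, Xs m) \<ge> 0"
      using H S by fast
    show "usc_env (D2 \<Omega>) (G2 F2) \<xi> (x, u x, P, X) \<ge> 0"
      by (rule usc_env_limit[OF lb pD L(1) Lp ge])
  qed
qed

lemma part1:
  fixes \<Omega> :: "(real^'n) set" and u :: "real^'n \<Rightarrow> real^'N"
    and F1 :: "real^'n \<Rightarrow> real^'N \<Rightarrow> real^'n^'N \<Rightarrow> real^'N"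
  assumes "open \<Omega>" and "continuous_on \<Omega> u" and lb: "locally_bounded (D1 \<Omega>) (G1 F1)"
  shows "contact_sol1 \<Omega> u F1 \<longleftrightarrow> (\<forall>x\<in>\<Omega>. \<forall>\<xi>\<in>sphere 0 1. \<forall>P\<in>J1 \<Omega> u \<xi> x.
          usc_env (D1 \<Omega>) (G1 F1) \<xi> (x, u x, P) \<ge> 0)"
proof
  assume "contact_sol1 \<Omega> u F1"
  then show "\<forall>x\<in>\<Omega>. \<forall>\<xi>\<in>sphere 0 1. \<forall>P\<in>J1 \<Omega> u \<xi> x.
          usc_env (D1 \<Omega>) (G1 F1) \<xi> (x, u x, P) \<ge> 0"
    unfolding contact_sol1_def using J1_sub_J1bar by fast
next
  assume H: "\<forall>x\<in>\<Omega>. \<forall>\<xi>\<in>sphere 0 1. \<forall>P\<in>J1 \<Omega> u \<xi> x.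
          usc_env (D1 \<Omega>) (G1 F1) \<xi> (x, u x, P) \<ge> 0"
  show "contact_sol1 \<Omega> u F1"
    unfolding contact_sol1_def
  proof (intro ballI)
    fix x \<xi> P
    assume x: "x \<in> \<Omega>" and xi: "\<xi> \<in> sphere (0::real^'N) 1" and PX: "P \<in> J1bar \<Omega> u \<xi> x"
    from PX obtain \<xi>s xs Ps where
      S: "\<forall>m. \<xi>s m \<in> sphere 0 1 \<and> xs m \<in> \<Omega> \<and> Ps m \<in> J1 \<Omega> u (\<xi>s m) (xs m)"
      and L: "\<xi>s \<longlonglongrightarrow> \<xi>" "xs \<longlonglongrightarrow> x" "Ps \<longlonglongrightarrow> P"
      unfolding J1bar_def by blast
    have "isCont u x" using assms(1,2) x continuous_on_eq_continuous_at by blast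
    then have Lu: "(\<lambda>m. u (xs m)) \<longlonglongrightarrow> u x" using L(2) isCont_tendsto_compose by blast
    have Lp: "(\<lambda>m. (xs m, u (xs m), Ps m)) \<longlonglongrightarrow> (x, u x, P)"
      using L Lu by (intro tendsto_Pair) auto
    have pD: "(x, u x, P) \<in> D1 \<Omega>" using x by (simp add: D1_def)
    have ge: "\<forall>m. usc_env (D1 \<Omega>) (G1 F1) (\<xi>s m) (xs m, u (xs m), Ps m) \<ge> 0"
      using H S by fast
    show "usc_env (D1 \<Omega>) (G1 F1) \<xi> (x, u x, P) \<ge> 0"
      by (rule usc_env_limit[OF lb pD L(1) Lp ge])
  qed
qed

theorem lemma12:
  fixes \<Omega> :: "(real^'n) set" and u :: "real^'n \<Rightarrow> real^'N"
    and F2 :: "real^'n \<Rightarrow> real^'N \<Rightarrow> real^'n^'N \<Rightarrow> real^'n^'n^'N \<Rightarrow> real^'N"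
    and F1 :: "real^'n \<Rightarrow> real^'N \<Rightarrow> real^'n^'N \<Rightarrow> real^'N"
  assumes "open \<Omega>" and "continuous_on \<Omega> u"
  shows
   "(locally_bounded (D2 \<Omega>) (G2 F2) \<longrightarrow>
      (contact_sol2 \<Omega> u F2 \<longleftrightarrow> (\<forall>x\<in>\<Omega>. \<forall>\<xi>\<in>sphere 0 1. \<forall>(P, X)\<in>J2 \<Omega> u \<xi> x.
          usc_env (D2 \<Omega>) (G2 F2) \<xi> (x, u x, P, X) \<ge> 0)))
  \<and> (locally_bounded (D1 \<Omega>) (G1 F1) \<longrightarrow>
      (contact_sol1 \<Omega> u F1 \<longleftrightarrow> (\<forall>x\<in>\<Omega>. \<forall>\<xi>\<in>sphere 0 1. \<forall>P\<in>J1 \<Omega> u \<xi> x.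
          usc_env (D1 \<Omega>) (G1 F1) \<xi> (x, u x, P) \<ge> 0)))
  \<and> (locally_bounded (D2 \<Omega>) (G2 F2) \<and> continuous_on (D2 \<Omega>) (G2 F2) \<longrightarrow>
      (contact_sol2 \<Omega> u F2 \<longleftrightarrow> (\<forall>x\<in>\<Omega>. \<forall>\<xi>\<in>sphere 0 1. \<forall>(P, X)\<in>J2 \<Omega> u \<xi> x.
          \<xi> \<bullet> F2 x (u x) P X \<ge> 0)))
  \<and> (locally_bounded (D1 \<Omega>) (G1 F1) \<and> continuous_on (D1 \<Omega>) (G1 F1) \<longrightarrow>
      (contact_sol1 \<Omega> u F1 \<longleftrightarrow> (\<forall>x\<in>\<Omega>. \<forall>\<xi>\<in>sphere 0 1. \<forall>P\<in>J1 \<Omega> u \<xi> x.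
          \<xi> \<bullet> F1 x (u x) P \<ge> 0)))"
proof (intro conjI impI)
  assume lb: "locally_bounded (D2 \<Omega>) (G2 F2)"
  show "contact_sol2 \<Omega> u F2 \<longleftrightarrow> (\<forall>x\<in>\<Omega>. \<forall>\<xi>\<in>sphere 0 1. \<forall>(P, X)\<in>J2 \<Omega> u \<xi> x.
          usc_env (D2 \<Omega>) (G2 F2) \<xi> (x, u x, P, X) \<ge> 0)"
    by (rule part2[OF assms lb])
next
  assume lb: "locally_bounded (D1 \<Omega>) (G1 F1)"
  show "contact_sol1 \<Omega> u F1 \<longleftrightarrow> (\<forall>x\<in>\<Omega>. \<forall>\<xi>\<in>sphere 0 1. \<forall>P\<in>J1 \<Omega> u \<xi> x.
          usc_env (D1 \<Omega>) (G1 F1) \<xi> (x, u x, P) \<ge> 0)"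
    by (rule part1[OF assms lb])
next
  assume a: "locally_bounded (D2 \<Omega>) (G2 F2) \<and> continuous_on (D2 \<Omega>) (G2 F2)"
  have eq: "usc_env (D2 \<Omega>) (G2 F2) \<xi> (x, u x, P, X) \<ge> 0 \<longleftrightarrow> \<xi> \<bullet> F2 x (u x) P X \<ge> 0"
    if "x \<in> \<Omega>" "(P, X) \<in> J2 \<Omega> u \<xi> x" for x \<xi> P X
  proof -
    have "symX X" using that(2) unfolding J2_def by blast
    then have "(x, u x, P, X) \<in> D2 \<Omega>" using that(1) by (simp add: D2_def)
    then have "usc_env (D2 \<Omega>) (G2 F2) \<xi> (x, u x, P, X) = ereal (\<xi> \<bullet> F2 x (u x) P X)"
      using usc_env_cont[of "D2 \<Omega>" "G2 F2"] a by (simp add: G2_def)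
    then show ?thesis by simp
  qed
  show "contact_sol2 \<Omega> u F2 \<longleftrightarrow> (\<forall>x\<in>\<Omega>. \<forall>\<xi>\<in>sphere 0 1. \<forall>(P, X)\<in>J2 \<Omega> u \<xi> x.
          \<xi> \<bullet> F2 x (u x) P X \<ge> 0)"
    unfolding part2[OF assms conjunct1[OF a]] using eq by fast
next
  assume a: "locally_bounded (D1 \<Omega>) (G1 F1) \<and> continuous_on (D1 \<Omega>) (G1 F1)"
  have eq: "usc_env (D1 \<Omega>) (G1 F1) \<xi> (x, u x, P) \<ge> 0 \<longleftrightarrow> \<xi> \<bullet> F1 x (u x) P \<ge> 0"
    if "x \<in> \<Omega>" for x \<xi> P
  proof -
    have "(x, u x, P) \<in> D1 \<Omega>" using that(1) by (simp add: D1_def)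
    then have "usc_env (D1 \<Omega>) (G1 F1) \<xi> (x, u x, P) = ereal (\<xi> \<bullet> F1 x (u x) P)"
      using usc_env_cont[of "D1 \<Omega>" "G1 F1"] a by (simp add: G1_def)
    then show ?thesis by simp
  qed
  show "contact_sol1 \<Omega> u F1 \<longleftrightarrow> (\<forall>x\<in>\<Omega>. \<forall>\<xi>\<in>sphere 0 1. \<forall>P\<in>J1 \<Omega> u \<xi> x.
          \<xi> \<bullet> F1 x (u x) P \<ge> 0)"
    unfolding part1[OF assms conjunct1[OF a]] using eq by fast
qed

end
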